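(* Let $\mathcal P$ be the language with a single unary predicate symbol $P$ (and crisp equality), and let $\mathbf A$ be the subalgebra of the standard Gödel chain $[0,1]_G$ with universe $\{0,\tfrac12,\tfrac34,1\}$. Let $\langle\mathbf A,\mathbf M\rangle$ and $\langle\mathbf A,\mathbf N\rangle$ be the structures with domain $\mathbb N$ and $P_{\mathbf M}(n)=\tfrac34$, $P_{\mathbf N}(n)=\tfrac12$ for all $n$. Then every $\mathcal P$-sentence has value $1$ in $\langle\mathbf A,\mathbf M\rangle$ iff it has value $1$ in $\langle\mathbf A,\mathbf N\rangle$. Let $\mathcal K$ be the class of $\mathcal P$-structures over $\mathbf A$ whose natural expansion to $\mathcal P^{\mathbf A}$ gives value $1$ to the sentence $\overline{3/4}\to(\forall x)P(x)$. Then $\mathcal K$ is closed under isomorphisms, substructures and ultraproducts, $\langle\mathbf A,\mathbf M\rangle\in\mathcal K$, $\langle\mathbf A,\mathbf N\rangle\notin\mathcal K$, and consequently $\mathcal K$ is not axiomatized by any set of universal $\mathcal P$-sentences (sentences without truth constants).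
   Context: The standard Gödel chain $[0,1]_G$ is $[0,1]$ with $x\wedge y=\min$, $x\vee y=\max$, strong conjunction $x\& y=\min(x,y)$, implication $x\to y=1$ if $x\le y$ and $y$ otherwise, and constants $0,1$. An $\mathbf{A}$-structure $\langle \mathbf A,\mathbf M\rangle$ consists of a nonempty domain $M$ and, for each $n$-ary predicate symbol, a map $M^n\to A$; equality $\approx$ is crisp (value $1$ on equal, $0$ on distinct elements). Truth values are computed Tarski-style: connectives by the operations of $\mathbf A$, $\forall$ by infimum, $\exists$ by supremum over the domain. $\mathcal P^{\mathbf A}$ is $\mathcal P$ expanded by a truth constant $\overline a$ for each $a\in A$; the natural expansion interprets $\overline a$ as $a$. Substructures are over the same $\mathbf A$: smaller domain with predicates interpreted by restriction. A class is axiomatized by a set of sentences $\Sigma$ if it consists exactly of the structures in which all sentences of $\Sigma$ have value $1$. A universal sentence has the form $(\forall\overrightarrow x)\psi$ with $\psi$ quantifier-free. *)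

theory Defs
  imports Complex_Main
begin

definition Aset :: "real set" where
  "Aset = {0, 1/2, 3/4, 1}"

definition g_imp :: "real \<Rightarrow> real \<Rightarrow> real" where
  "g_imp x y = (if x \<le> y then 1 else y)"

datatype form =
    PAtom nat
  | Eq nat nat
  | TConst real          \<comment> \<open>truth constant (only in the expanded language P^A)\<close>
  | Bot
  | Top
  | Conj form form
  | Disj form form
  | SConj form form
  | Imp form form
  | All nat form
  | Ex nat form

fun fv :: "form \<Rightarrow> nat set" where
  "fv (PAtom n) = {n}"
| "fv (Eq m n) = {m, n}"
| "fv (TConst a) = {}"
| "fv Bot = {}"
| "fv Top = {}"
| "fv (Conj a b) = fv a \<union> fv b"
| "fv (Disj a b) = fv a \<union> fv b"
| "fv (SConj a b) = fv a \<union> fv b"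
| "fv (Imp a b) = fv a \<union> fv b"
| "fv (All v a) = fv a - {v}"
| "fv (Ex v a) = fv a - {v}"

fun no_consts :: "form \<Rightarrow> bool" where
  "no_consts (TConst a) = False"
| "no_consts (Conj a b) = (no_consts a \<and> no_consts b)"
| "no_consts (Disj a b) = (no_consts a \<and> no_consts b)"
| "no_consts (SConj a b) = (no_consts a \<and> no_consts b)"
| "no_consts (Imp a b) = (no_consts a \<and> no_consts b)"
| "no_consts (All v a) = no_consts a"
| "no_consts (Ex v a) = no_consts a"
| "no_consts _ = True"

fun qfree :: "form \<Rightarrow> bool" where
  "qfree (All v a) = False"
| "qfree (Ex v a) = False"
| "qfree (Conj a b) = (qfree a \<and> qfree b)"
| "qfree (Disj a b) = (qfree a \<and> qfree b)"
| "qfree (SConj a b) = (qfree a \<and> qfree b)"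
| "qfree (Imp a b) = (qfree a \<and> qfree b)"
| "qfree _ = True"

definition sentence :: "form \<Rightarrow> bool" where
  "sentence \<phi> \<longleftrightarrow> fv \<phi> = {}"

definition P_sentence :: "form \<Rightarrow> bool" where
  "P_sentence \<phi> \<longleftrightarrow> sentence \<phi> \<and> no_consts \<phi>"

definition universal_P_sentence :: "form \<Rightarrow> bool" where
  "universal_P_sentence \<phi> \<longleftrightarrow> P_sentence \<phi> \<and>
     (\<exists>xs \<psi>. \<phi> = foldr All xs \<psi> \<and> qfree \<psi>)"

type_synonym 'a struc = "'a set \<times> ('a \<Rightarrow> real)"

definition wf_struc :: "'a struc \<Rightarrow> bool" where
  "wf_struc S \<longleftrightarrow> fst S \<noteq> {} \<and> (\<forall>x\<in>fst S. snd S x \<in> Aset)"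

fun eval :: "'a struc \<Rightarrow> (nat \<Rightarrow> 'a) \<Rightarrow> form \<Rightarrow> real" where
  "eval S e (PAtom n) = snd S (e n)"
| "eval S e (Eq m n) = (if e m = e n then 1 else 0)"
| "eval S e (TConst a) = a"
| "eval S e Bot = 0"
| "eval S e Top = 1"
| "eval S e (Conj a b) = min (eval S e a) (eval S e b)"
| "eval S e (Disj a b) = max (eval S e a) (eval S e b)"
| "eval S e (SConj a b) = min (eval S e a) (eval S e b)"
| "eval S e (Imp a b) = g_imp (eval S e a) (eval S e b)"
| "eval S e (All v a) = (INF x\<in>fst S. eval S (e(v := x)) a)"
| "eval S e (Ex v a) = (SUP x\<in>fst S. eval S (e(v := x)) a)"

definition models :: "'a struc \<Rightarrow> form \<Rightarrow> bool" where
  "models S \<phi> \<longleftrightarrow> (\<forall>e. (\<forall>n. e n \<in> fst S) \<longrightarrow> eval S e \<phi> = 1)"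

definition isomorphic :: "'a struc \<Rightarrow> 'b struc \<Rightarrow> bool" where
  "isomorphic S T \<longleftrightarrow> (\<exists>f. bij_betw f (fst S) (fst T) \<and> (\<forall>x\<in>fst S. snd T (f x) = snd S x))"

definition substructure :: "'a struc \<Rightarrow> 'a struc \<Rightarrow> bool" where
  "substructure T S \<longleftrightarrow> fst T \<noteq> {} \<and> fst T \<subseteq> fst S \<and> (\<forall>x\<in>fst T. snd T x = snd S x)"

definition ultrafilter_on :: "'i set \<Rightarrow> 'i set set \<Rightarrow> bool" where
  "ultrafilter_on I U \<longleftrightarrow>
     U \<subseteq> Pow I \<and> I \<in> U \<and> {} \<notin> U \<and>
     (\<forall>X Y. X \<in> U \<and> X \<subseteq> Y \<and> Y \<subseteq> I \<longrightarrow> Y \<in> U) \<and>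
     (\<forall>X Y. X \<in> U \<and> Y \<in> U \<longrightarrow> X \<inter> Y \<in> U) \<and>
     (\<forall>X. X \<subseteq> I \<longrightarrow> X \<in> U \<or> I - X \<in> U)"

definition up_rel :: "'i set \<Rightarrow> 'i set set \<Rightarrow> ('i \<Rightarrow> 'a) \<Rightarrow> ('i \<Rightarrow> 'a) \<Rightarrow> bool" where
  "up_rel I U f g \<longleftrightarrow> {i \<in> I. f i = g i} \<in> U"

definition up_dom :: "'i set \<Rightarrow> 'i set set \<Rightarrow> ('i \<Rightarrow> 'a struc) \<Rightarrow> ('i \<Rightarrow> 'a) set set" where
  "up_dom I U S =
     (let Pr = {f. \<forall>i\<in>I. f i \<in> fst (S i)} in {{g \<in> Pr. up_rel I U f g} | f. f \<in> Pr})"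

text \<open>Ultraproduct over the finite algebra A: A^I/U is canonically A, so the value
  of P at a class [f] is the U-limit of the values P_i(f i).\<close>
definition up_pred :: "'i set \<Rightarrow> 'i set set \<Rightarrow> ('i \<Rightarrow> 'a struc) \<Rightarrow> ('i \<Rightarrow> 'a) set \<Rightarrow> real" where
  "up_pred I U S c = (THE a. a \<in> Aset \<and> (\<exists>f\<in>c. {i \<in> I. snd (S i) (f i) = a} \<in> U))"

definition ultraproduct :: "'i set \<Rightarrow> 'i set set \<Rightarrow> ('i \<Rightarrow> 'a struc) \<Rightarrow> ('i \<Rightarrow> 'a) set struc" where
  "ultraproduct I U S = (up_dom I U S, up_pred I U S)"

definition StrM :: "nat struc" where "StrM = (UNIV, \<lambda>n. 3/4)"
definition StrN :: "nat struc" where "StrN = (UNIV, \<lambda>n. 1/2)"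

definition phi0 :: form where "phi0 = Imp (TConst (3/4)) (All 0 (PAtom 0))"

definition classK :: "'a struc \<Rightarrow> bool" where
  "classK S \<longleftrightarrow> wf_struc S \<and> models S phi0"

definition axiomatized_by :: "('a struc \<Rightarrow> bool) \<Rightarrow> form set \<Rightarrow> bool" where
  "axiomatized_by K \<Sigma> \<longleftrightarrow> (\<forall>S. wf_struc S \<longrightarrow> (K S \<longleftrightarrow> (\<forall>\<phi>\<in>\<Sigma>. models S \<phi>)))"

end

theory Submission
  imports Defs
begin

definition hh :: "real \<Rightarrow> real" where
  "hh x = (if x \<le> 3/4 then 2/3 * x else 2 * x - 1)"

lemma hh_less: "x < y \<Longrightarrow> hh x < hh y"
  unfolding hh_def by auto

lemma hh_le: "x \<le> y \<Longrightarrow> hh x \<le> hh y"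
  unfolding hh_def by auto

lemma hh_le_iff: "hh x \<le> hh y \<longleftrightarrow> x \<le> y"
  by (meson hh_le hh_less not_le)

lemma hh_eq_iff: "hh x = hh y \<longleftrightarrow> x = y"
proof
  assume "hh x = hh y"
  then have "x \<le> y" "y \<le> x" using hh_le_iff by (metis order_refl)+
  then show "x = y" by simp
qed simp

lemma hh_mono: "mono hh"
  by (simp add: hh_le monoI)

lemma hh_vals: "hh 0 = 0" "hh 1 = 1" "hh (3/4) = 1/2"
  unfolding hh_def by auto

lemma hh_min: "hh (min a b) = min (hh a) (hh b)"
  by (simp add: min_def hh_le_iff)

lemma hh_max: "hh (max a b) = max (hh a) (hh b)"
  by (simp add: max_def hh_le_iff)

lemma hh_imp: "hh (g_imp a b) = g_imp (hh a) (hh b)"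
  by (simp add: g_imp_def hh_le_iff hh_vals)

lemma hh_Inf: "finite F \<Longrightarrow> F \<noteq> {} \<Longrightarrow> Inf (hh ` F) = hh (Inf F)"
  by (simp add: cInf_eq_Min mono_Min_commute[OF hh_mono])

lemma hh_Sup: "finite F \<Longrightarrow> F \<noteq> {} \<Longrightarrow> Sup (hh ` F) = hh (Sup F)"
  by (simp add: cSup_eq_Max mono_Max_commute[OF hh_mono])

lemma hh_eq1: "hh y = 1 \<longleftrightarrow> y = 1"
  by (metis hh_eq_iff hh_vals(2))

lemma evalM_range: "no_consts \<phi> \<Longrightarrow> eval StrM e \<phi> \<in> {0, 3/4, 1}"
proof (induction \<phi> arbitrary: e)
  case (All v a)
  let ?F = "(\<lambda>x. eval StrM (e(v := x)) a) ` UNIV"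
  have "\<And>x. eval StrM (e(v := x)) a \<in> {0, 3/4, 1}" using All by simp
  hence sub: "?F \<subseteq> {0, 3/4, 1}" by blast
  hence fin: "finite ?F" by (rule finite_subset) simp
  have "Inf ?F = Min ?F" by (simp add: cInf_eq_Min fin)
  moreover have "Min ?F \<in> ?F" using fin by (intro Min_in) auto
  ultimately show ?case using sub by (auto simp: StrM_def)
next
  case (Ex v a)
  let ?F = "(\<lambda>x. eval StrM (e(v := x)) a) ` UNIV"
  have "\<And>x. eval StrM (e(v := x)) a \<in> {0, 3/4, 1}" using Ex by simp
  hence sub: "?F \<subseteq> {0, 3/4, 1}" by blast
  hence fin: "finite ?F" by (rule finite_subset) simp
  have "Sup ?F = Max ?F" by (simp add: cSup_eq_Max fin)
  moreover have "Max ?F \<in> ?F" using fin by (intro Max_in) auto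
  ultimately show ?case using sub by (auto simp: StrM_def)
qed (auto simp: StrM_def g_imp_def min_def max_def)

lemma evalN: "no_consts \<phi> \<Longrightarrow> eval StrN e \<phi> = hh (eval StrM e \<phi>)"
proof (induction \<phi> arbitrary: e)
  case (All v a)
  let ?F = "(\<lambda>x. eval StrM (e(v := x)) a) ` UNIV"
  have "\<And>x. eval StrM (e(v := x)) a \<in> {0, 3/4, 1}" using All evalM_range by simp
  hence sub: "?F \<subseteq> {0, 3/4, 1}" by blast
  hence fin: "finite ?F" by (rule finite_subset) simp
  have "eval StrN e (All v a) = Inf (hh ` ?F)"
    using All by (simp add: StrN_def StrM_def image_image)
  also have "\<dots> = hh (Inf ?F)" using fin by (intro hh_Inf) auto
  finally show ?case by (simp add: StrM_def)
next
  case (Ex v a)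
  let ?F = "(\<lambda>x. eval StrM (e(v := x)) a) ` UNIV"
  have "\<And>x. eval StrM (e(v := x)) a \<in> {0, 3/4, 1}" using Ex evalM_range by simp
  hence sub: "?F \<subseteq> {0, 3/4, 1}" by blast
  hence fin: "finite ?F" by (rule finite_subset) simp
  have "eval StrN e (Ex v a) = Sup (hh ` ?F)"
    using Ex by (simp add: StrN_def StrM_def image_image)
  also have "\<dots> = hh (Sup ?F)" using fin by (intro hh_Sup) auto
  finally show ?case by (simp add: StrM_def)
qed (auto simp: StrM_def StrN_def hh_vals hh_min hh_max hh_imp)

lemma part1: "no_consts \<phi> \<Longrightarrow> models StrM \<phi> \<longleftrightarrow> models StrN \<phi>"
proof -
  assume nc: "no_consts \<phi>"
  have eq: "\<And>e. eval StrN e \<phi> = 1 \<longleftrightarrow> eval StrM e \<phi> = 1" using nc by (simp add: evalN hh_eq1)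
  have f: "fst StrM = UNIV" "fst StrN = UNIV" by (simp_all add: StrM_def StrN_def)
  show ?thesis unfolding models_def f by (simp add: eq)
qed

lemma models_phi0:
  assumes "wf_struc S"
  shows "models S phi0 \<longleftrightarrow> (\<forall>x\<in>fst S. 3/4 \<le> snd S x)"
proof -
  have ne: "fst S \<noteq> {}" and vals: "\<forall>x\<in>fst S. snd S x \<in> Aset"
    using assms by (auto simp: wf_struc_def)
  have bdd: "bdd_below (snd S ` fst S)"
    using vals by (intro bdd_belowI[of _ 0]) (auto simp: Aset_def)
  have ev: "\<And>e. eval S e phi0 = g_imp (3/4) (INF x\<in>fst S. snd S x)"
    by (simp add: phi0_def)
  have infle: "(INF x\<in>fst S. snd S x) \<le> 1"
  proof -
    obtain x where x: "x \<in> fst S" using ne by auto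
    have "(INF x\<in>fst S. snd S x) \<le> snd S x" using x by (rule cINF_lower[OF bdd])
    also have "\<dots> \<le> 1" using vals x by (auto simp: Aset_def)
    finally show ?thesis .
  qed
  have "models S phi0 \<longleftrightarrow> g_imp (3/4) (INF x\<in>fst S. snd S x) = 1"
  proof
    assume "models S phi0"
    obtain x where x: "x \<in> fst S" using ne by auto
    then have h1: "\<forall>n. (\<lambda>n. x) n \<in> fst S" by simp
    have mm: "\<forall>e. (\<forall>n. e n \<in> fst S) \<longrightarrow> eval S e phi0 = 1"
      using \<open>models S phi0\<close> unfolding models_def .
    have "eval S (\<lambda>n. x) phi0 = 1" using mm[rule_format, of "\<lambda>n. x"] h1 by simp
    then show "g_imp (3/4) (INF x\<in>fst S. snd S x) = 1" by (simp only: ev)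
  next
    assume "g_imp (3/4) (INF x\<in>fst S. snd S x) = 1"
    then show "models S phi0" unfolding models_def ev by simp
  qed
  also have "\<dots> \<longleftrightarrow> 3/4 \<le> (INF x\<in>fst S. snd S x)"
    using infle by (auto simp: g_imp_def)
  also have "\<dots> \<longleftrightarrow> (\<forall>x\<in>fst S. 3/4 \<le> snd S x)"
  proof
    assume A: "3/4 \<le> (INF x\<in>fst S. snd S x)"
    show "\<forall>x\<in>fst S. 3/4 \<le> snd S x"
    proof
      fix x assume "x \<in> fst S"
      then have "(INF x\<in>fst S. snd S x) \<le> snd S x" by (rule cINF_lower[OF bdd])
      then show "3/4 \<le> snd S x" using A by linarith
    qed
  next
    assume "\<forall>x\<in>fst S. 3/4 \<le> snd S x"
    then show "3/4 \<le> (INF x\<in>fst S. snd S x)" using ne by (intro cINF_greatest) auto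
  qed
  finally show ?thesis .
qed

theorem mainTheorem6:
  shows "(\<forall>\<phi>. P_sentence \<phi> \<longrightarrow> (models StrM \<phi> \<longleftrightarrow> models StrN \<phi>))
    \<and> (\<forall>(S :: 'a struc) (T :: 'b struc).
          wf_struc S \<and> wf_struc T \<and> classK S \<and> isomorphic S T \<longrightarrow> classK T)
    \<and> (\<forall>(S :: 'a struc) T. classK S \<and> substructure T S \<longrightarrow> classK T)
    \<and> (\<forall>(I :: 'i set) U (S :: 'i \<Rightarrow> 'c struc).
          I \<noteq> {} \<and> ultrafilter_on I U \<and> (\<forall>i\<in>I. classK (S i))
          \<longrightarrow> classK (ultraproduct I U S))
    \<and> classK StrM
    \<and> \<not> classK StrN
    \<and> \<not> (\<exists>\<Sigma>. (\<forall>\<phi>\<in>\<Sigma>. universal_P_sentence \<phi>) \<and> axiomatized_by (classK :: nat struc \<Rightarrow> bool) \<Sigma>)"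
proof (intro conjI allI impI)
  show p1: "models StrM \<phi> \<longleftrightarrow> models StrN \<phi>" if "P_sentence \<phi>" for \<phi>
    using that part1 by (simp add: P_sentence_def)
next
  fix S :: "'a struc" and T :: "'b struc"
  assume A: "wf_struc S \<and> wf_struc T \<and> classK S \<and> isomorphic S T"
  then obtain f where f: "bij_betw f (fst S) (fst T)" "\<forall>x\<in>fst S. snd T (f x) = snd S x"
    by (auto simp: isomorphic_def)
  have "\<forall>x\<in>fst S. 3/4 \<le> snd S x" using A by (auto simp: classK_def models_phi0)
  then have "\<forall>y\<in>fst T. 3/4 \<le> snd T y" using f
    by (metis bij_betw_imp_surj_on imageE)
  then show "classK T" using A by (auto simp: classK_def models_phi0)
next
  fix S :: "'a struc" and T
  assume A: "classK S \<and> substructure T S"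
  then have wS: "wf_struc S" and K: "\<forall>x\<in>fst S. 3/4 \<le> snd S x"
    using A by (auto simp: classK_def models_phi0)
  have wT: "wf_struc T" using A wS by (auto simp: substructure_def wf_struc_def)
  have "\<forall>x\<in>fst T. 3/4 \<le> snd T x" using A K by (auto simp: substructure_def)
  then show "classK T" using wT by (auto simp: classK_def models_phi0)
next
  fix I :: "'i set" and U and S :: "'i \<Rightarrow> 'c struc"
  assume A: "I \<noteq> {} \<and> ultrafilter_on I U \<and> (\<forall>i\<in>I. classK (S i))"
  then have uf: "ultrafilter_on I U" and KS: "\<forall>i\<in>I. classK (S i)" by auto
  have wS: "\<And>i. i \<in> I \<Longrightarrow> wf_struc (S i)" using KS by (auto simp: classK_def)
  have geS: "\<And>i x. i \<in> I \<Longrightarrow> x \<in> fst (S i) \<Longrightarrow> 3/4 \<le> snd (S i) x"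
    using KS wS by (auto simp: classK_def models_phi0)
  have valS: "\<And>i x. i \<in> I \<Longrightarrow> x \<in> fst (S i) \<Longrightarrow> snd (S i) x \<in> Aset"
    using wS by (auto simp: wf_struc_def)
  define Pr where "Pr = {f. \<forall>i\<in>I. f i \<in> fst (S i)}"
  have uf': "U \<subseteq> Pow I \<and> I \<in> U \<and> {} \<notin> U \<and>
     (\<forall>X Y. X \<in> U \<and> X \<subseteq> Y \<and> Y \<subseteq> I \<longrightarrow> Y \<in> U) \<and>
     (\<forall>X Y. X \<in> U \<and> Y \<in> U \<longrightarrow> X \<inter> Y \<in> U) \<and>
     (\<forall>X. X \<subseteq> I \<longrightarrow> X \<in> U \<or> I - X \<in> U)"
    using uf unfolding ultrafilter_on_def .
  have IU: "I \<in> U" using uf' by (elim conjE)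
  have emp: "{} \<notin> U" using uf' by (elim conjE)
  have int0: "\<forall>X Y. X \<in> U \<and> Y \<in> U \<longrightarrow> X \<inter> Y \<in> U" using uf' by (elim conjE)
  have cpl0: "\<forall>X. X \<subseteq> I \<longrightarrow> X \<in> U \<or> I - X \<in> U" using uf' by (elim conjE)
  have int: "\<And>X Y. X \<in> U \<Longrightarrow> Y \<in> U \<Longrightarrow> X \<inter> Y \<in> U" using int0 by simp
  have cpl: "\<And>X. X \<subseteq> I \<Longrightarrow> X \<in> U \<or> I - X \<in> U" using cpl0 by simp
  have ne: "\<And>X. X \<in> U \<Longrightarrow> \<exists>i. i \<in> X" using emp by (metis ex_in_conv)
  have dom: "up_dom I U S = {{g \<in> Pr. up_rel I U f g} | f. f \<in> Pr}"
    by (simp add: up_dom_def Pr_def)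
  have exv: "\<exists>a\<in>Aset. {i \<in> I. snd (S i) (f i) = a} \<in> U" if f: "f \<in> Pr" for f
  proof (rule ccontr)
    define X where "X a = {i \<in> I. snd (S i) (f i) = a}" for a
    assume "\<not> (\<exists>a\<in>Aset. {i \<in> I. snd (S i) (f i) = a} \<in> U)"
    then have H: "\<And>a. a \<in> Aset \<Longrightarrow> X a \<notin> U" unfolding X_def by blast
    have c: "I - X a \<in> U" if "a \<in> Aset" for a
    proof -
      have "X a \<subseteq> I" unfolding X_def by blast
      then show ?thesis using cpl H[OF that] by blast
    qed
    have c1: "I - X 0 \<in> U" and c2: "I - X (1/2) \<in> U" and c3: "I - X (3/4) \<in> U"
      and c4: "I - X 1 \<in> U" by (rule c, simp add: Aset_def)+
    have "(I - X 0) \<inter> (I - X (1/2)) \<inter> (I - X (3/4)) \<inter> (I - X 1) \<in> U"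
      using c1 c2 c3 c4 int by metis
    moreover have "(I - X 0) \<inter> (I - X (1/2)) \<inter> (I - X (3/4)) \<inter> (I - X 1) = {}"
    proof (rule equals0I)
      fix i assume i: "i \<in> (I - X 0) \<inter> (I - X (1/2)) \<inter> (I - X (3/4)) \<inter> (I - X 1)"
      then have iI: "i \<in> I" by blast
      have "snd (S i) (f i) \<in> Aset" using valS[OF iI] f iI unfolding Pr_def by blast
      then have "i \<in> X 0 \<or> i \<in> X (1/2) \<or> i \<in> X (3/4) \<or> i \<in> X 1"
        using iI unfolding X_def Aset_def by auto
      then show False using i by blast
    qed
    ultimately show False using emp by simp
  qed
  have pred: "up_pred I U S c \<in> Aset \<and> 3/4 \<le> up_pred I U S c" if c: "c \<in> up_dom I U S" for c
  proof -
    obtain f where f: "f \<in> Pr" and cdef: "c = {g \<in> Pr. up_rel I U f g}" using c dom by auto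
    have fc: "f \<in> c" using f IU by (simp add: cdef up_rel_def)
    let ?Q = "\<lambda>a. a \<in> Aset \<and> (\<exists>g\<in>c. {i \<in> I. snd (S i) (g i) = a} \<in> U)"
    obtain a where a: "a \<in> Aset" "{i \<in> I. snd (S i) (f i) = a} \<in> U" using exv[OF f] by blast
    have uniq: "b = a" if Qb: "?Q b" for b
    proof -
      obtain g where g: "g \<in> c" "{i \<in> I. snd (S i) (g i) = b} \<in> U" using Qb by blast
      have "{i \<in> I. f i = g i} \<in> U" using g(1) by (simp add: cdef up_rel_def)
      then have "{i \<in> I. f i = g i} \<inter> {i \<in> I. snd (S i) (g i) = b} \<inter> {i \<in> I. snd (S i) (f i) = a} \<in> U"
        using g(2) a(2) by (intro int)
      then obtain i where "i \<in> {i \<in> I. f i = g i} \<inter> {i \<in> I. snd (S i) (g i) = b} \<inter> {i \<in> I. snd (S i) (f i) = a}"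
        using ne by blast
      then show "b = a" by auto
    qed
    have Qa: "?Q a" using a fc by blast
    have eq: "up_pred I U S c = a" unfolding up_pred_def
      using Qa uniq by (rule the_equality)
    obtain i where i: "i \<in> I" "snd (S i) (f i) = a" using ne[OF a(2)] by blast
    have "3/4 \<le> a" using geS[OF i(1)] f i unfolding Pr_def by auto
    then show ?thesis using eq a by simp
  qed
  have Prne: "Pr \<noteq> {}"
  proof -
    have "\<forall>i\<in>I. fst (S i) \<noteq> {}" using wS by (auto simp: wf_struc_def)
    then have "(\<lambda>i. SOME x. x \<in> fst (S i)) \<in> Pr" unfolding Pr_def by (auto intro: some_in_eq[THEN iffD2])
    then show ?thesis by blast
  qed
  have domne: "up_dom I U S \<noteq> {}" using Prne dom by auto
  have wU: "wf_struc (ultraproduct I U S)"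
    using domne pred by (auto simp: wf_struc_def ultraproduct_def)
  have "\<forall>c\<in>fst (ultraproduct I U S). 3/4 \<le> snd (ultraproduct I U S) c"
    using pred by (auto simp: ultraproduct_def)
  then show "classK (ultraproduct I U S)" using wU by (auto simp: classK_def models_phi0)
next
  have wM: "wf_struc StrM" by (simp add: wf_struc_def StrM_def Aset_def)
  then show KM: "classK StrM" by (simp add: models_phi0 classK_def StrM_def)
  have wN: "wf_struc StrN" by (simp add: wf_struc_def StrN_def Aset_def)
  then show nKN: "\<not> classK StrN" by (simp add: models_phi0 classK_def StrN_def)
  show "\<not> (\<exists>\<Sigma>. (\<forall>\<phi>\<in>\<Sigma>. universal_P_sentence \<phi>) \<and> axiomatized_by (classK :: nat struc \<Rightarrow> bool) \<Sigma>)"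
  proof
    assume "\<exists>\<Sigma>. (\<forall>\<phi>\<in>\<Sigma>. universal_P_sentence \<phi>) \<and> axiomatized_by (classK :: nat struc \<Rightarrow> bool) \<Sigma>"
    then obtain \<Sigma> where U: "\<forall>\<phi>\<in>\<Sigma>. universal_P_sentence \<phi>"
      and Ax: "axiomatized_by (classK :: nat struc \<Rightarrow> bool) \<Sigma>" by blast
    have ax: "\<forall>S :: nat struc. wf_struc S \<longrightarrow> (classK S \<longleftrightarrow> (\<forall>\<phi>\<in>\<Sigma>. models S \<phi>))"
      using Ax unfolding axiomatized_by_def by simp
    have "\<forall>\<phi>\<in>\<Sigma>. models StrM \<phi>" using ax[rule_format, OF wM] KM by blast
    then have "\<forall>\<phi>\<in>\<Sigma>. models StrN \<phi>" using U part1
      by (simp add: universal_P_sentence_def P_sentence_def)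
    then have "classK StrN" using ax[rule_format, OF wN] by blast
    then show False using nKN by simp
  qed
qed

end
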